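(* Let $\alpha,\beta,b,d>0$, $d_2>0$, $\tau>0$, and let $\Gamma(x,y,a)$ be the Green's function described in the context. The principal eigenvalue $s_1$ of the nonlocal eigenvalue problem $s\psi=d_2\psi''-\alpha\psi+e^{-s\tau}\frac{b\beta}{d}\int_0^\pi\Gamma(x,y,\tau)\psi(y)\,dy$, $x\in(0,\pi)$, $\psi'(0)=\psi'(\pi)=0$, has the same sign as $\lambda_1=-\alpha+\frac{\beta b}{d e^{\alpha\tau}}$.
   Context: $\Gamma(x,y,a)$, $x,y\in[0,\pi]$, $a>0$, is the Green's function of $\partial_aW=d_2\partial_{xx}W-\alpha W$ on $(0,\pi)$ with Neumann conditions $\partial_xW(a,0)=\partial_xW(a,\pi)=0$, i.e. the solution with initial value $W_0$ is $\int_0^\pi\Gamma(x,y,a)W_0(y)\,dy$. The principal eigenvalue of the nonlocal problem is the eigenvalue associated with a strictly positive eigenfunction (its existence is known). *)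

theory Defs
  imports "HOL-Analysis.Analysis"
begin

text \<open>Green's function of  W_a = d2 W_xx - alpha W  on (0,pi) with homogeneous Neumann
  boundary conditions, given by its eigenfunction (cosine) expansion:
  Gamma(x,y,a) = e^(-alpha a) (1/pi + (2/pi) sum_{n>=1} e^(-d2 n^2 a) cos(n x) cos(n y)).\<close>
definition green_neumann :: "real \<Rightarrow> real \<Rightarrow> real \<Rightarrow> real \<Rightarrow> real \<Rightarrow> real" where
  "green_neumann d2 \<alpha> x y a =
     exp (- \<alpha> * a) * (1 / pi + 2 / pi *
       (\<Sum>n. exp (- d2 * (real (Suc n))^2 * a) * cos (real (Suc n) * x) * cos (real (Suc n) * y)))"

text \<open>s is a principal eigenvalue of the nonlocal problem: there is a strictly positive
  classical (C^2 on [0,pi]) eigenfunction psi with Neumann boundary conditions.\<close>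
definition principal_eigenpair ::
  "real \<Rightarrow> real \<Rightarrow> real \<Rightarrow> real \<Rightarrow> real \<Rightarrow> real \<Rightarrow> real \<Rightarrow> (real \<Rightarrow> real) \<Rightarrow> bool" where
  "principal_eigenpair \<alpha> \<beta> b d d2 \<tau> s \<psi> \<longleftrightarrow>
     (\<exists>\<psi>' \<psi>''.
        (\<forall>x\<in>{0..pi}. (\<psi> has_real_derivative \<psi>' x) (at x within {0..pi})) \<and>
        (\<forall>x\<in>{0..pi}. (\<psi>' has_real_derivative \<psi>'' x) (at x within {0..pi})) \<and>
        continuous_on {0..pi} \<psi>'' \<and>
        \<psi>' 0 = 0 \<and> \<psi>' pi = 0 \<and>
        (\<forall>x\<in>{0<..<pi}.
           s * \<psi> x = d2 * \<psi>'' x - \<alpha> * \<psi> x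
             + exp (- s * \<tau>) * (b * \<beta> / d) *
               integral {0..pi} (\<lambda>y. green_neumann d2 \<alpha> x y \<tau> * \<psi> y))) \<and>
     (\<forall>x\<in>{0..pi}. \<psi> x > 0)"

end

theory Submission
  imports Defs
begin

lemma cml: "(f::real\<Rightarrow>real) integrable_on S \<Longrightarrow> (\<lambda>x. (c::real) * f x) integrable_on S"
  using integrable_on_cmult_left[of f S c] by simp

lemma cos_int0: "integral {0..pi} (\<lambda>x. cos (real (Suc n) * x)) = 0"
proof -
  have "((\<lambda>x. cos (real (Suc n) * x)) has_integral
      ((\<lambda>x. sin (real (Suc n) * x) / real (Suc n)) pi - (\<lambda>x. sin (real (Suc n) * x) / real (Suc n)) 0)) {0..pi}"
    apply (rule fundamental_theorem_of_calculus)
     apply simp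
    apply (rule has_real_derivative_iff_has_vector_derivative[THEN iffD1])
    apply (auto intro!: derivative_eq_intros)
    done
  moreover have "sin (real (Suc n) * pi) = 0" by (rule sin_npi)
  ultimately show ?thesis by (simp add: integral_unique)
qed

lemma exp_summable:
  fixes d2 \<tau> :: real assumes "d2 > 0" "\<tau> > 0"
  shows "summable (\<lambda>n. exp (- d2 * (real (Suc n))^2 * \<tau>))"
proof (rule summable_comparison_test)
  show "summable (\<lambda>n. exp (- d2 * \<tau>) ^ n)"
    using assms by (intro summable_geometric) simp
  show "\<exists>N. \<forall>n\<ge>N. norm (exp (- d2 * (real (Suc n))^2 * \<tau>)) \<le> exp (- d2 * \<tau>) ^ n"
  proof (intro exI allI impI)
    fix n :: nat
    have "n \<le> (Suc n)^2" by (simp add: power2_eq_square)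
    then have "real n \<le> (real (Suc n))^2" by (metis of_nat_le_iff of_nat_power)
    then have "d2 * \<tau> * real n \<le> d2 * \<tau> * (real (Suc n))^2"
      using assms by (intro mult_left_mono) auto
    then have "exp (- d2 * (real (Suc n))^2 * \<tau>) \<le> exp (real n * (- d2 * \<tau>))"
      by (simp add: algebra_simps)
    moreover have "exp (real n * (- d2 * \<tau>)) = exp (- d2 * \<tau>) ^ n" by (rule exp_of_nat_mult)
    ultimately have "exp (- d2 * (real (Suc n))^2 * \<tau>) \<le> exp (- d2 * \<tau>) ^ n"
      by (simp only:)
    then show "norm (exp (- d2 * (real (Suc n))^2 * \<tau>)) \<le> exp (- d2 * \<tau>) ^ n"
      by simp
  qed
qed

theorem lemma5p2:
  fixes \<alpha> \<beta> b d d2 \<tau> s :: real and \<psi> :: "real \<Rightarrow> real"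
  assumes "\<alpha> > 0" "\<beta> > 0" "b > 0" "d > 0" "d2 > 0" "\<tau> > 0"
    and "principal_eigenpair \<alpha> \<beta> b d d2 \<tau> s \<psi>"
  shows "sgn s = sgn (- \<alpha> + \<beta> * b / (d * exp (\<alpha> * \<tau>)))"
proof -
  obtain \<psi>' \<psi>'' where d1: "\<forall>x\<in>{0..pi}. (\<psi> has_real_derivative \<psi>' x) (at x within {0..pi})"
    and dd: "\<forall>x\<in>{0..pi}. (\<psi>' has_real_derivative \<psi>'' x) (at x within {0..pi})"
    and c2: "continuous_on {0..pi} \<psi>''" and b0: "\<psi>' 0 = 0" and bpi: "\<psi>' pi = 0"
    and eq: "\<forall>x\<in>{0<..<pi}. s * \<psi> x = d2 * \<psi>'' x - \<alpha> * \<psi> x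
             + exp (- s * \<tau>) * (b * \<beta> / d) *
               integral {0..pi} (\<lambda>y. green_neumann d2 \<alpha> x y \<tau> * \<psi> y)"
    and pos: "\<forall>x\<in>{0..pi}. \<psi> x > 0"
    using assms(7) unfolding principal_eigenpair_def by blast
  have pge: "\<psi> y \<ge> 0" if "y \<in> {0..pi}" for y using pos that by (meson less_imp_le)
  define a where "a n = exp (- d2 * (real (Suc n))^2 * \<tau>)" for n
  define g where "g n x y = a n * cos (real (Suc n) * x) * cos (real (Suc n) * y)" for n x y
  define A where "A = suminf a"
  have apos: "a n > 0" for n unfolding a_def by simp
  have asum: "summable a" unfolding a_def using assms(5,6) by (rule exp_summable)
  have gbound: "\<bar>g n x y\<bar> \<le> a n" for n x y
  proof -
    have "\<bar>g n x y\<bar> = a n * (\<bar>cos (real (Suc n) * x)\<bar> * \<bar>cos (real (Suc n) * y)\<bar>)"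
      unfolding g_def using apos[of n] by (simp add: abs_mult)
    also have "\<dots> \<le> a n * 1"
      using apos[of n] by (intro mult_left_mono) (auto intro: mult_le_one)
    finally show ?thesis by simp
  qed
  have gsum: "summable (\<lambda>n. g n x y)" for x y
    by (rule summable_comparison_test[OF _ asum]) (use gbound in auto)
  have asumle: "(\<Sum>n<k. a n) \<le> A" for k
    unfolding A_def by (rule sum_le_suminf[OF asum]) (use apos in \<open>auto intro: less_imp_le\<close>)
  have psum_bound: "\<bar>\<Sum>n<k. g n x y\<bar> \<le> A" for k x y
  proof -
    have "\<bar>\<Sum>n<k. g n x y\<bar> \<le> (\<Sum>n<k. \<bar>g n x y\<bar>)" by (rule sum_abs)
    also have "\<dots> \<le> (\<Sum>n<k. a n)" by (intro sum_mono gbound)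
    finally show ?thesis using asumle[of k] by simp
  qed
  have A0: "A \<ge> 0" using asumle[of 0] by simp
  have cpsi: "continuous_on {0..pi} \<psi>"
    by (rule DERIV_continuous_on) (use d1 in auto)
  have intpsi: "\<psi> integrable_on {0..pi}" using cpsi by (rule integrable_continuous_interval)
  have Gdef: "green_neumann d2 \<alpha> x y \<tau> = exp (- \<alpha> * \<tau>) * (1 / pi + 2 / pi * (\<Sum>n. g n x y))" for x y
    unfolding green_neumann_def g_def a_def by simp
  define \<Psi> where "\<Psi> = integral {0..pi} \<psi>"
  define c where "c n = integral {0..pi} (\<lambda>y. cos (real (Suc n) * y) * \<psi> y)" for n
  define P where "P k x = (\<Sum>n<k. a n * c n * cos (real (Suc n) * x))" for k x
  define H where "H x = integral {0..pi} (\<lambda>y. (\<Sum>n. g n x y) * \<psi> y)" for x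
  have step1: "(\<lambda>y. (\<Sum>n. g n x y) * \<psi> y) integrable_on {0..pi} \<and> (\<lambda>k. P k x) \<longlonglongrightarrow> H x" for x
  proof -
    let ?f = "\<lambda>k y. (\<Sum>n<k. g n x y) * \<psi> y"
    have fi: "?f k integrable_on {0..pi}" for k
      by (rule integrable_continuous_interval) (auto simp: g_def intro!: continuous_intros cpsi)
    have hi: "(\<lambda>y. A * \<psi> y) integrable_on {0..pi}" using intpsi by (rule cml)
    have bd: "norm (?f k y) \<le> A * \<psi> y" if "y \<in> {0..pi}" for k y
    proof -
      have py: "\<psi> y > 0" using pos that by auto
      have "norm (?f k y) = \<bar>\<Sum>n<k. g n x y\<bar> * \<psi> y" using pos that by (simp add: abs_mult abs_of_pos)
      also have "\<dots> \<le> A * \<psi> y" using py psum_bound[where k=k and x=x and y=y] by (intro mult_right_mono) auto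
      finally show ?thesis .
    qed
    have lim: "(\<lambda>k. ?f k y) \<longlonglongrightarrow> (\<Sum>n. g n x y) * \<psi> y" for y
      by (intro tendsto_mult_right summable_LIMSEQ gsum)
    have intf: "integral {0..pi} (?f k) = P k x" for k
    proof -
      have "integral {0..pi} (?f k) = integral {0..pi} (\<lambda>y. \<Sum>n<k. (a n * cos (real (Suc n) * x)) * (cos (real (Suc n) * y) * \<psi> y))"
        unfolding g_def sum_distrib_right by (simp add: algebra_simps)
      also have "\<dots> = (\<Sum>n<k. integral {0..pi} (\<lambda>y. (a n * cos (real (Suc n) * x)) * (cos (real (Suc n) * y) * \<psi> y)))"
        by (rule integral_sum) (auto intro!: integrable_continuous_interval continuous_intros cpsi)
      also have "\<dots> = P k x" unfolding P_def c_def integral_mult_right by (simp add: algebra_simps)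
      finally show ?thesis .
    qed
    from dominated_convergence[OF fi hi bd lim] show ?thesis using intf unfolding H_def by simp
  qed
  have Pi: "P k integrable_on {0..pi}" for k
    unfolding P_def by (rule integrable_continuous_interval) (auto intro!: continuous_intros)
  have Pint: "integral {0..pi} (P k) = 0" for k
  proof -
    have "integral {0..pi} (P k) = (\<Sum>n<k. integral {0..pi} (\<lambda>x. a n * c n * cos (real (Suc n) * x)))"
      unfolding P_def
      by (rule integral_sum) (auto intro!: integrable_continuous_interval continuous_intros)
    also have "\<dots> = 0" by (simp only: integral_mult_right cos_int0) simp
    finally show ?thesis .
  qed
  have cbound: "\<bar>c n\<bar> \<le> \<Psi>" for n
  proof -
    have "norm (c n) \<le> integral {0..pi} \<psi>" unfolding c_def
    proof (rule integral_norm_bound_integral)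
      show "(\<lambda>y. cos (real (Suc n) * y) * \<psi> y) integrable_on {0..pi}"
        by (rule integrable_continuous_interval) (auto intro!: continuous_intros cpsi)
      show "\<psi> integrable_on {0..pi}" by (rule intpsi)
      fix y assume y: "y \<in> {0..pi}"
      have "\<bar>cos (real (Suc n) * y)\<bar> * \<psi> y \<le> 1 * \<psi> y"
        using pge[OF y] by (intro mult_right_mono) auto
      then show "norm (cos (real (Suc n) * y) * \<psi> y) \<le> \<psi> y" using pge[OF y] by (simp add: abs_mult)
    qed
    then show ?thesis unfolding \<Psi>_def by simp
  qed
  have Psi0: "\<Psi> \<ge> 0" using cbound[of 0] by simp
  have Pbound: "norm (P k x) \<le> A * \<Psi>" for k x
  proof -
    have "\<bar>P k x\<bar> \<le> (\<Sum>n<k. \<bar>a n * c n * cos (real (Suc n) * x)\<bar>)" unfolding P_def by (rule sum_abs)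
    also have "\<dots> \<le> (\<Sum>n<k. a n * \<Psi>)"
    proof (rule sum_mono)
      fix n
      have "\<bar>a n * c n * cos (real (Suc n) * x)\<bar> = a n * (\<bar>c n\<bar> * \<bar>cos (real (Suc n) * x)\<bar>)"
        using apos[of n] by (simp add: abs_mult)
      also have "\<dots> \<le> a n * (\<Psi> * 1)"
        using apos[of n] cbound[of n] Psi0 by (intro mult_left_mono mult_mono) auto
      finally show "\<bar>a n * c n * cos (real (Suc n) * x)\<bar> \<le> a n * \<Psi>" by simp
    qed
    also have "\<dots> = (\<Sum>n<k. a n) * \<Psi>" by (simp add: sum_distrib_right)
    also have "\<dots> \<le> A * \<Psi>" using asumle[of k] Psi0 by (intro mult_right_mono) auto
    finally show ?thesis by simp
  qed
  have Hlim: "(\<lambda>k. P k x) \<longlonglongrightarrow> H x" for x using step1 by blast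
  have constI: "(\<lambda>x. A * \<Psi>) integrable_on {0..pi}" by (rule integrable_const_ivl)
  have Hi: "H integrable_on {0..pi}"
    by (rule dominated_convergence(1)[OF Pi constI Pbound Hlim])
  have "(\<lambda>k. integral {0..pi} (P k)) \<longlonglongrightarrow> integral {0..pi} H"
    by (rule dominated_convergence(2)[OF Pi constI Pbound Hlim])
  then have H0: "integral {0..pi} H = 0" using Pint by (simp add: LIMSEQ_const_iff)
  define F where "F x = integral {0..pi} (\<lambda>y. green_neumann d2 \<alpha> x y \<tau> * \<psi> y)" for x
  have Fx: "F x = exp (- \<alpha> * \<tau>) * (\<Psi> / pi + 2 / pi * H x)" for x
  proof -
    have GI: "(\<lambda>y. (\<Sum>n. g n x y) * \<psi> y) integrable_on {0..pi}" using step1 by blast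
    have "F x = integral {0..pi} (\<lambda>y. exp (- \<alpha> * \<tau>) * ((1 / pi) * \<psi> y + (2 / pi) * ((\<Sum>n. g n x y) * \<psi> y)))"
      unfolding F_def Gdef by (simp add: algebra_simps)
    also have "\<dots> = exp (- \<alpha> * \<tau>) * ((1 / pi) * \<Psi> + (2 / pi) * H x)"
      apply (subst integral_mult_right)
      apply (subst integral_add)
      using intpsi GI apply (auto intro: cml simp: \<Psi>_def H_def)
      done
    finally show ?thesis by simp
  qed
  have intF: "integral {0..pi} F = exp (- \<alpha> * \<tau>) * \<Psi>"
  proof -
    have "integral {0..pi} F = integral {0..pi} (\<lambda>x. exp (- \<alpha> * \<tau>) * (\<Psi> / pi) + (exp (- \<alpha> * \<tau>) * (2 / pi)) * H x)"
      unfolding Fx by (simp add: algebra_simps)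
    also have "\<dots> = exp (- \<alpha> * \<tau>) * (\<Psi> / pi) * pi + (exp (- \<alpha> * \<tau>) * (2 / pi)) * integral {0..pi} H"
      apply (subst integral_add)
      using Hi apply (auto intro: cml simp: integral_const_real)
      done
    also have "\<dots> = exp (- \<alpha> * \<tau>) * \<Psi>" using H0 by simp
    finally show ?thesis .
  qed
  have FTC: "(\<psi>'' has_integral (\<psi>' pi - \<psi>' 0)) {0..pi}"
    apply (rule fundamental_theorem_of_calculus)
     apply simp
    using dd by (simp add: has_real_derivative_iff_has_vector_derivative)
  then have pp: "\<psi>'' integrable_on {0..pi}" "integral {0..pi} \<psi>'' = 0"
    using b0 bpi by (auto simp: integral_unique has_integral_integrable)
  define K where "K = b * \<beta> / d"
  have "integral {0..pi} (\<lambda>x. exp (- s * \<tau>) * K * F x) = integral {0..pi} (\<lambda>x. (s + \<alpha>) * \<psi> x - d2 * \<psi>'' x)"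
    by (rule integral_spike[of "{0, pi}"]) (use eq in \<open>auto simp: F_def K_def algebra_simps\<close>)
  also have "\<dots> = (s + \<alpha>) * \<Psi>"
    apply (subst integral_diff)
    using intpsi pp by (auto intro: cml simp: \<Psi>_def)
  finally have key0: "exp (- s * \<tau>) * K * (exp (- \<alpha> * \<tau>) * \<Psi>) = (s + \<alpha>) * \<Psi>"
    using intF by simp
  have Psipos: "\<Psi> > 0"
  proof -
    obtain x0 where x0: "x0 \<in> {0..pi}" "\<forall>y\<in>{0..pi}. \<psi> x0 \<le> \<psi> y"
      using continuous_attains_inf[OF compact_Icc _ cpsi] by auto
    have "integral {0..pi} (\<lambda>x. \<psi> x0) \<le> integral {0..pi} \<psi>"
      by (rule integral_le) (use x0 intpsi in auto)
    then have "pi * \<psi> x0 \<le> \<Psi>" by (simp add: integral_const_real \<Psi>_def)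
    moreover have "pi * \<psi> x0 > 0" using pos x0 by simp
    ultimately show ?thesis by simp
  qed
  define L where "L = K * exp (- \<alpha> * \<tau>)"
  have "\<Psi> * (s + \<alpha>) = \<Psi> * (exp (- s * \<tau>) * L)"
    using key0 unfolding L_def by (simp add: algebra_simps)
  then have key: "s + \<alpha> = exp (- s * \<tau>) * L"
    using Psipos by simp
  have Lpos: "L > 0" unfolding L_def K_def using assms by simp
  have lam: "- \<alpha> + \<beta> * b / (d * exp (\<alpha> * \<tau>)) = L - \<alpha>"
    unfolding L_def K_def by (simp add: exp_minus field_simps)
  have main: "sgn s = sgn (L - \<alpha>)"
  proof (cases "s > 0")
    case True
    then have "exp (- s * \<tau>) < 1" using assms(6) by simp
    then have "exp (- s * \<tau>) * L < 1 * L" using Lpos by (intro mult_strict_right_mono) auto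
    then show ?thesis using True key by (simp add: sgn_if)
  next
    case False
    show ?thesis
    proof (cases "s = 0")
      case True then show ?thesis using key by simp
    next
      case False2: False
      then have sn: "s < 0" using False by simp
      then have "exp (- s * \<tau>) > 1" using assms(6) by (simp add: mult_neg_pos)
      then have "exp (- s * \<tau>) * L > 1 * L" using Lpos by (intro mult_strict_right_mono) auto
      then show ?thesis using sn key by (simp add: sgn_if)
    qed
  qed
  then show ?thesis by (simp only: lam)
qed

end
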